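(* Let $(X,Y,Z)$ be jointly distributed on finite alphabets $\mathcal{X},\mathcal{Y},\mathcal{Z}$ with joint $p(x,y,z)$, and let $\mathcal{Z}_+ = \{z\in\mathcal{Z}: p(z)>0\}$. Let $L>0$, $\tau>0$, $\delta\in(0,1)$. Assume that for each $z\in\mathcal{Z}_+$ we are given preparation oracles for $p(X,Y\mid z)$ and for $p(X\mid z)p(Y\mid z)$, a per-stratum log-ratio oracle $\mathcal{O}_{\log}^{(z)}$ (for the pair $p_z := p(X,Y\mid z)$, $q_z := p(X\mid z)p(Y\mid z)$), and classical access to $p(z)$. Then Algorithm QCMIE (defined in the context) outputs $\widehat{\mathrm{I}}$ satisfying \[ |\widehat{\mathrm{I}} - \mathrm{I}(X;Y\mid Z)| \le \tau + \max_{z\in\mathcal{Z}_+}|\eta_L^{(z)}| \] with probability at least $1-\delta$, using $\mathcal{O}\bigl(|\mathcal{Z}|\cdot(L/\tau)\cdot\log(|\mathcal{Z}|/\delta)\bigr)$ oracle queries, where $\eta_L^{(z)} := D_{\mathrm{KL}}(p_z\|q_z) - D_{\mathrm{KL},L}(p_z\|q_z)$.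
   Context: Logs are base 2. $\mathrm{I}(X;Y\mid Z) = \sum_{z} p(z)\,D_{\mathrm{KL}}(p(X,Y\mid z)\,\|\,p(X\mid z)p(Y\mid z))$. For distributions $p,q$ on a finite set: $\mathrm{clip}_L(u)=\max(-L,\min(L,u))$, $\ell_L(w)=\mathrm{clip}_L(\log_2(p(w)/q(w)))$ (with $\log_2(p/0)=+\infty$, $\log_2(0/q)=-\infty$), $g_L = (\ell_L+L)/(2L)$, $D_{\mathrm{KL},L}(p\|q) = \sum_w p(w)\ell_L(w)$. Oracles: a preparation oracle for $p$ is a unitary $\mathcal{O}_p$ with $\mathcal{O}_p|0\rangle = \sum_w\sqrt{p(w)}|w\rangle$; a log-ratio oracle is a reversible unitary with $|w\rangle|0\rangle_b\mapsto|w\rangle|\ell_L(w)\rangle_b$ ($b=\mathcal{O}(\log(L/\tau))$ fixed-point bits). QKLA$(p,q,\tau,\delta',L)$: with $M = 2^{\lceil\log_2\lceil 4\pi L/\tau\rceil\rceil}$, $k=\lceil 5\ln(1/\delta')\rceil$, repeat $k$ times: build $\mathcal{A}$ = (prepare via $\mathcal{O}_p$, apply log-ratio oracle, apply uniformly controlled $R_y(2\arcsin\sqrt{g_L})$ on an ancilla, uncompute log-ratio oracle) and run canonical amplitude estimation with $M$ Grover iterates $-\mathcal{A}S_0\mathcal{A}^\dagger S_\chi$ to get $\hat a^{(j)}=\sin^2(\pi m_j/M)$; output $2L\cdot\mathrm{median}_j\hat a^{(j)} - L$. Algorithm QCMIE: for each $z\in\mathcal{Z}_+$, run QKLA on $p_z,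 q_z$ with precision $\tau$, confidence $\delta/|\mathcal{Z}_+|$ and clip $L$, obtaining $\widehat D(z)$; output $\widehat{\mathrm{I}} = \sum_{z\in\mathcal{Z}_+} p(z)\widehat D(z)$. *)

theory Defs
  imports "HOL-Probability.Probability"
begin

definition clipL :: "real \<Rightarrow> real \<Rightarrow> real" where
  "clipL L u = max (-L) (min L u)"

text \<open>Clipped log-ratio; log2(p/0)=+inf (clipped to L), log2(0/q)=-inf (clipped to -L).\<close>
definition ellL :: "real \<Rightarrow> ('w \<Rightarrow> real) \<Rightarrow> ('w \<Rightarrow> real) \<Rightarrow> 'w \<Rightarrow> real" where
  "ellL L p q w = (if p w = 0 then -L else if q w = 0 then L
                   else clipL L (log 2 (p w / q w)))"

definition gL :: "real \<Rightarrow> ('w \<Rightarrow> real) \<Rightarrow> ('w \<Rightarrow> real) \<Rightarrow> 'w \<Rightarrow> real" where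
  "gL L p q w = (ellL L p q w + L) / (2 * L)"

definition KL :: "'w set \<Rightarrow> ('w \<Rightarrow> real) \<Rightarrow> ('w \<Rightarrow> real) \<Rightarrow> real" where
  "KL W p q = (\<Sum>w\<in>W. p w * log 2 (p w / q w))"

definition KLclip :: "'w set \<Rightarrow> real \<Rightarrow> ('w \<Rightarrow> real) \<Rightarrow> ('w \<Rightarrow> real) \<Rightarrow> real" where
  "KLclip W L p q = (\<Sum>w\<in>W. p w * ellL L p q w)"

text \<open>Joint distribution P of (X,Y,Z) on nat-coded finite alphabets.\<close>
definition pZ :: "(nat \<times> nat \<times> nat) pmf \<Rightarrow> nat \<Rightarrow> real" where
  "pZ P z = measure_pmf.prob P {t. snd (snd t) = z}"

definition pXgZ :: "(nat \<times> nat \<times> nat) pmf \<Rightarrow> nat \<Rightarrow> nat \<Rightarrow> real" where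
  "pXgZ P z x = measure_pmf.prob P {t. fst t = x \<and> snd (snd t) = z} / pZ P z"

definition pYgZ :: "(nat \<times> nat \<times> nat) pmf \<Rightarrow> nat \<Rightarrow> nat \<Rightarrow> real" where
  "pYgZ P z y = measure_pmf.prob P {t. fst (snd t) = y \<and> snd (snd t) = z} / pZ P z"

definition pcond :: "(nat \<times> nat \<times> nat) pmf \<Rightarrow> nat \<Rightarrow> nat \<times> nat \<Rightarrow> real" where
  "pcond P z w = pmf P (fst w, snd w, z) / pZ P z"

definition qcond :: "(nat \<times> nat \<times> nat) pmf \<Rightarrow> nat \<Rightarrow> nat \<times> nat \<Rightarrow> real" where
  "qcond P z w = pXgZ P z (fst w) * pYgZ P z (snd w)"

definition Zplus :: "nat set \<Rightarrow> (nat \<times> nat \<times> nat) pmf \<Rightarrow> nat set" where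
  "Zplus Z P = {z \<in> Z. pZ P z > 0}"

definition CMI :: "nat set \<Rightarrow> nat set \<Rightarrow> nat set \<Rightarrow> (nat \<times> nat \<times> nat) pmf \<Rightarrow> real" where
  "CMI X Y Z P = (\<Sum>z\<in>Zplus Z P. pZ P z * KL (X \<times> Y) (pcond P z) (qcond P z))"

definition etaL :: "nat set \<Rightarrow> nat set \<Rightarrow> real \<Rightarrow> (nat \<times> nat \<times> nat) pmf \<Rightarrow> nat \<Rightarrow> real" where
  "etaL X Y L P z = KL (X \<times> Y) (pcond P z) (qcond P z) - KLclip (X \<times> Y) L (pcond P z) (qcond P z)"

text \<open>Good-state amplitude of A|0>: a = sum_w p(w) g_L(w).\<close>
definition amp :: "'w set \<Rightarrow> real \<Rightarrow> ('w \<Rightarrow> real) \<Rightarrow> ('w \<Rightarrow> real) \<Rightarrow> real" where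
  "amp W L p q = (\<Sum>w\<in>W. p w * gL L p q w)"

text \<open>With theta = arcsin(sqrt a), Q^k A|0> = sin((2k+1)theta)|good> + cos((2k+1)theta)|bad>.
  Canonical AE prepares sum_k |k> Q^k A|0> / sqrt M, applies the inverse QFT on the
  first register and measures it; the probability of outcome y is given below.\<close>
definition ae_prob :: "nat \<Rightarrow> real \<Rightarrow> nat \<Rightarrow> real" where
  "ae_prob M a y =
     (let th = arcsin (sqrt a) in
       (cmod (\<Sum>k<M. cis (- 2 * pi * real k * real y / real M)
                      * complex_of_real (sin ((2 * real k + 1) * th) / real M)))\<^sup>2
     + (cmod (\<Sum>k<M. cis (- 2 * pi * real k * real y / real M)
                      * complex_of_real (cos ((2 * real k + 1) * th) / real M)))\<^sup>2)"

definition ae_pmf :: "nat \<Rightarrow> real \<Rightarrow> nat pmf" where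
  "ae_pmf M a = embed_pmf (\<lambda>y. if y < M then ae_prob M a y else 0)"

primrec iid_pmf :: "nat \<Rightarrow> 'a pmf \<Rightarrow> 'a list pmf" where
  "iid_pmf 0 D = return_pmf []"
| "iid_pmf (Suc n) D = bind_pmf D (\<lambda>x. map_pmf (\<lambda>xs. x # xs) (iid_pmf n D))"

definition median :: "real list \<Rightarrow> real" where
  "median xs = sort xs ! ((length xs - 1) div 2)"

definition qkla_M :: "real \<Rightarrow> real \<Rightarrow> nat" where
  "qkla_M L \<tau> = 2 ^ nat \<lceil>log 2 (real (nat \<lceil>4 * pi * L / \<tau>\<rceil>))\<rceil>"

definition qkla_k :: "real \<Rightarrow> nat" where
  "qkla_k \<delta>' = nat \<lceil>5 * ln (1 / \<delta>')\<rceil>"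

definition QKLA :: "'w set \<Rightarrow> ('w \<Rightarrow> real) \<Rightarrow> ('w \<Rightarrow> real) \<Rightarrow> real \<Rightarrow> real \<Rightarrow> real \<Rightarrow> real pmf" where
  "QKLA W p q \<tau> \<delta>' L =
     map_pmf (\<lambda>ms. 2 * L * median (map (\<lambda>m. (sin (pi * real m / real (qkla_M L \<tau>)))\<^sup>2) ms) - L)
       (iid_pmf (qkla_k \<delta>') (ae_pmf (qkla_M L \<tau>) (amp W L p q)))"

text \<open>Oracle queries of one QKLA call: each run of AE applies A once (1 preparation + 2
  log-ratio queries) and M Grover iterates, each using A and A-dagger (6 queries).\<close>
definition qkla_queries :: "real \<Rightarrow> real \<Rightarrow> real \<Rightarrow> nat" where
  "qkla_queries \<tau> \<delta>' L = qkla_k \<delta>' * (3 + 6 * qkla_M L \<tau>)"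

definition QCMIE :: "nat set \<Rightarrow> nat set \<Rightarrow> nat set \<Rightarrow> (nat \<times> nat \<times> nat) pmf
                     \<Rightarrow> real \<Rightarrow> real \<Rightarrow> real \<Rightarrow> real pmf" where
  "QCMIE X Y Z P \<tau> \<delta> L =
     map_pmf (\<lambda>D. \<Sum>z\<in>Zplus Z P. pZ P z * D z)
       (Pi_pmf (Zplus Z P) 0
          (\<lambda>z. QKLA (X \<times> Y) (pcond P z) (qcond P z) \<tau> (\<delta> / real (card (Zplus Z P))) L))"

definition qcmie_queries :: "nat set \<Rightarrow> (nat \<times> nat \<times> nat) pmf \<Rightarrow> real \<Rightarrow> real \<Rightarrow> real \<Rightarrow> nat" where
  "qcmie_queries Z P \<tau> \<delta> L =
     card (Zplus Z P) * qkla_queries \<tau> (\<delta> / real (card (Zplus Z P))) L"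

end

theory Submission
  imports Defs
begin

lemma sin_lb7:
  fixes x :: real assumes "0 \<le> x" shows "x - x^3/6 + x^5/120 - x^7/5040 \<le> sin x"
proof -
  have "\<bar>sin x - (\<Sum>m<7. sin_coeff m * x ^ m)\<bar> \<le> inverse (fact 7) * \<bar>x\<bar> ^ 7"
    by (rule Maclaurin_sin_bound)
  moreover have "(\<Sum>m<7. sin_coeff m * x ^ m) = x - x^3/6 + x^5/120"
    by (simp add: sin_coeff_def lessThan_nat_numeral fact_numeral)
  moreover have "inverse (fact 7) * \<bar>x\<bar> ^ 7 = x^7/5040"
    using assms by (simp add: fact_numeral eval_nat_numeral field_simps)
  ultimately show ?thesis by linarith
qed

definition Gf :: "real \<Rightarrow> real" where
  "Gf g = 1 + (g/(1-g))^2 + (g/(1+g))^2 + (g/(2-g))^2"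

lemma Gf_mono: assumes "0 \<le> a" "a \<le> g" "g \<le> 1/2" shows "Gf a \<le> Gf g"
proof -
  have 1: "a/(1-a) \<le> g/(1-g)" using assms by (simp add: divide_simps) (simp add: algebra_simps) 
  have 2: "a/(1+a) \<le> g/(1+g)" using assms by (simp add: divide_simps) (simp add: algebra_simps)
  have 3: "a/(2-a) \<le> g/(2-g)" using assms by (simp add: divide_simps) (simp add: algebra_simps)
  have "(a/(1-a))^2 \<le> (g/(1-g))^2" using 1 assms by (intro power_mono) auto
  moreover have "(a/(1+a))^2 \<le> (g/(1+g))^2" using 2 assms by (intro power_mono) auto
  moreover have "(a/(2-a))^2 \<le> (g/(2-g))^2" using 3 assms by (intro power_mono) auto
  ultimately show ?thesis unfolding Gf_def by linarith
qed

lemma interval_h: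
  fixes a b g :: real
  assumes "0 \<le> a" "a \<le> g" "g \<le> b" "b \<le> 1/2" "0 < g"
    and "0 \<le> 1 - (3.1416*b)^2/6 + (3.1415*a)^4/120 - (3.1416*b)^6/5040"
    and "4/5 \<le> (1 - (3.1416*b)^2/6 + (3.1415*a)^4/120 - (3.1416*b)^6/5040)^2 * Gf a"
  shows "4/5 \<le> (sin(pi*g)/(pi*g))^2 * Gf g"
proof -
  define x where "x = pi*g"
  define c where "c = 1 - (3.1416*b)^2/6 + (3.1415*a)^4/120 - (3.1416*b)^6/5040"
  have xpos: "0 < x" using assms by (simp add: x_def)
  have xu: "x \<le> 3.1416*b" unfolding x_def using pi_approx assms
    by (intro mult_mono) auto
  have xl: "3.1415*a \<le> x" unfolding x_def using pi_approx assms
    by (intro mult_mono) auto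
  have s: "x - x^3/6 + x^5/120 - x^7/5040 \<le> sin x" using xpos by (intro sin_lb7) auto
  have "sin x / x \<ge> (x - x^3/6 + x^5/120 - x^7/5040) / x"
    using s xpos by (intro divide_right_mono) auto
  also have "(x - x^3/6 + x^5/120 - x^7/5040) / x = 1 - x^2/6 + x^4/120 - x^6/5040"
    using xpos by (simp add: field_simps eval_nat_numeral)
  finally have r: "1 - x^2/6 + x^4/120 - x^6/5040 \<le> sin x / x" .
  have "x^2 \<le> (3.1416*b)^2" using xu xpos by (intro power_mono) auto
  moreover have "x^6 \<le> (3.1416*b)^6" using xu xpos by (intro power_mono) auto
  moreover have "(3.1415*a)^4 \<le> x^4" using xl assms by (intro power_mono) auto
  ultimately have "c \<le> sin x / x" using r unfolding c_def by linarith
  moreover have "0 \<le> c" using assms(6) by (simp add: c_def)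
  ultimately have "c^2 \<le> (sin x / x)^2" by (intro power_mono) auto
  moreover have "Gf a \<le> Gf g" using assms by (intro Gf_mono) auto
  moreover have "0 \<le> Gf a" unfolding Gf_def by (simp add: add_nonneg_nonneg)
  ultimately have "c^2 * Gf a \<le> (sin x / x)^2 * Gf g"
    by (intro mult_mono) auto
  then show ?thesis using assms(7) unfolding c_def x_def by linarith
qed

lemma h_half:
  fixes g :: real
  assumes "0 < g" "g \<le> 1/2"
  shows "4/5 \<le> (sin(pi*g)/(pi*g))^2 * Gf g"
proof -
  have c0: "4/5 \<le> (sin(pi*g)/(pi*g))^2 * Gf g" if "0 \<le> g" "g \<le> 25/100"
    using that assms by (intro interval_h[where a="0" and b="25/100"]) (auto simp: Gf_def power_divide)
  have c25: "4/5 \<le> (sin(pi*g)/(pi*g))^2 * Gf g" if "25/100 \<le> g" "g \<le> 32/100"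
    using that assms by (intro interval_h[where a="25/100" and b="32/100"]) (auto simp: Gf_def power_divide)
  have c32: "4/5 \<le> (sin(pi*g)/(pi*g))^2 * Gf g" if "32/100 \<le> g" "g \<le> 37/100"
    using that assms by (intro interval_h[where a="32/100" and b="37/100"]) (auto simp: Gf_def power_divide)
  have c37: "4/5 \<le> (sin(pi*g)/(pi*g))^2 * Gf g" if "37/100 \<le> g" "g \<le> 40/100"
    using that assms by (intro interval_h[where a="37/100" and b="40/100"]) (auto simp: Gf_def power_divide)
  have c40: "4/5 \<le> (sin(pi*g)/(pi*g))^2 * Gf g" if "40/100 \<le> g" "g \<le> 43/100"
    using that assms by (intro interval_h[where a="40/100" and b="43/100"]) (auto simp: Gf_def power_divide)
  have c43: "4/5 \<le> (sin(pi*g)/(pi*g))^2 * Gf g" if "43/100 \<le> g" "g \<le> 45/100"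
    using that assms by (intro interval_h[where a="43/100" and b="45/100"]) (auto simp: Gf_def power_divide)
  have c45: "4/5 \<le> (sin(pi*g)/(pi*g))^2 * Gf g" if "45/100 \<le> g" "g \<le> 47/100"
    using that assms by (intro interval_h[where a="45/100" and b="47/100"]) (auto simp: Gf_def power_divide)
  have c47: "4/5 \<le> (sin(pi*g)/(pi*g))^2 * Gf g" if "47/100 \<le> g" "g \<le> 49/100"
    using that assms by (intro interval_h[where a="47/100" and b="49/100"]) (auto simp: Gf_def power_divide)
  have c49: "4/5 \<le> (sin(pi*g)/(pi*g))^2 * Gf g" if "49/100 \<le> g" "g \<le> 50/100"
    using that assms by (intro interval_h[where a="49/100" and b="50/100"]) (auto simp: Gf_def power_divide)
  show ?thesis
  proof -
    consider "0 \<le> g \<and> g \<le> 25/100" | "25/100 \<le> g \<and> g \<le> 32/100" | "32/100 \<le> g \<and> g \<le> 37/100" | "37/100 \<le> g \<and> g \<le> 40/100" | "40/100 \<le> g \<and> g \<le> 43/100" | "43/100 \<le> g \<and> g \<le> 45/100" | "45/100 \<le> g \<and> g \<le> 47/100" | "47/100 \<le> g \<and> g \<le> 49/100" | "49/100 \<le> g \<and> g \<le> 50/100"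
      using assms by linarith
    then show ?thesis using c0 c25 c32 c37 c40 c43 c45 c47 c49 by metis
  qed
qed

lemma sq_ratio_aux:
  fixes s x y :: real assumes "x \<noteq> 0" "y \<noteq> 0"
  shows "(s/(pi*x))^2 * (x/y)^2 = (s/(pi*y))^2"
  using assms by (simp add: power_divide power_mult_distrib)

lemma hsum_half:
  fixes g :: real assumes "0 < g" "g \<le> 1/2"
  shows "4/5 \<le> (sin(pi*g)/(pi*g))^2 + (sin(pi*g)/(pi*(1-g)))^2 + (sin(pi*g)/(pi*(1+g)))^2 + (sin(pi*g)/(pi*(2-g)))^2"
proof -
  let ?s = "sin(pi*g)"
  have "(?s/(pi*g))^2 * Gf g = (?s/(pi*g))^2 + (?s/(pi*g))^2 * (g/(1-g))^2 + (?s/(pi*g))^2 * (g/(1+g))^2 + (?s/(pi*g))^2 * (g/(2-g))^2"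
    unfolding Gf_def by (simp add: algebra_simps)
  also have "\<dots> = (?s/(pi*g))^2 + (?s/(pi*(1-g)))^2 + (?s/(pi*(1+g)))^2 + (?s/(pi*(2-g)))^2"
    using assms by (simp only: sq_ratio_aux) 
  finally show ?thesis using h_half[OF assms] by simp
qed

lemma hsum:
  fixes g :: real assumes "0 < g" "g < 1"
  shows "4/5 \<le> (sin(pi*g)/(pi*g))^2 + (sin(pi*g)/(pi*(1-g)))^2 + (sin(pi*g)/(pi*(1+g)))^2 + (sin(pi*g)/(pi*(2-g)))^2"
proof (cases "g \<le> 1/2")
  case True then show ?thesis using hsum_half assms by auto
next
  case False
  define g' where "g' = 1 - g"
  have g': "0 < g'" "g' \<le> 1/2" using False assms by (auto simp: g'_def)
  have gg: "g = 1 - g'" by (simp add: g'_def)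
  have sg: "sin(pi*(1-g')) = sin(pi*g')"
    by (simp add: right_diff_distrib sin_diff)
  have "(sin(pi*g)/(pi*g))^2 + (sin(pi*g)/(pi*(1-g)))^2 + (sin(pi*g)/(pi*(1+g)))^2 + (sin(pi*g)/(pi*(2-g)))^2
     = (sin(pi*g')/(pi*g'))^2 + (sin(pi*g')/(pi*(1-g')))^2 + (sin(pi*g')/(pi*(1+g')))^2 + (sin(pi*g')/(pi*(2-g')))^2"
    unfolding gg sg by (simp add: algebra_simps)
  then show ?thesis using hsum_half[OF g'] by linarith
qed

definition FF :: "nat \<Rightarrow> real \<Rightarrow> real" where
  "FF M t = (cmod (\<Sum>k<M. cis (real k * t)))^2 / (real M)^2"

lemma cmod_cis_minus1: "cmod (cis t - 1) = 2 * \<bar>sin (t/2)\<bar>"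
  using dist_exp_i_1[of t] by (simp add: cis_conv_exp)

lemma FF_lb:
  fixes \<delta> :: real assumes M: "M > 0" and d: "\<delta> \<noteq> 0"
  shows "(sin (pi*\<delta>) / (pi*\<delta>))^2 \<le> FF M (2*pi*\<delta>/M)"
proof -
  define t where "t = 2*pi*\<delta>/M"
  have sumeq: "(\<Sum>k<M. cis (real k * t)) = (\<Sum>k<M. (cis t)^k)"
    by (intro sum.cong) (simp_all add: Complex.DeMoivre)
  have bound1: "(sin (pi*\<delta>) / (pi*\<delta>))^2 \<le> 1"
  proof -
    have "\<bar>sin (pi*\<delta>)\<bar> \<le> \<bar>pi*\<delta>\<bar>" by (rule abs_sin_x_le_abs_x)
    then have "\<bar>sin (pi*\<delta>) / (pi*\<delta>)\<bar> \<le> 1" using d by (simp add: divide_le_eq_1)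
    then show ?thesis by (metis abs_divide abs_square_le_1)
  qed
  show ?thesis
  proof (cases "cis t = 1")
    case True
    then have "(\<Sum>k<M. cis (real k * t)) = of_nat M" unfolding sumeq by simp
    then have "FF M t = 1" using M unfolding FF_def by simp
    then show ?thesis using bound1 by (simp add: t_def)
  next
    case False
    have "(\<Sum>k<M. cis (real k * t)) = ((cis t)^M - 1) / (cis t - 1)"
      unfolding sumeq using False by (rule geometric_sum)
    also have "(cis t)^M = cis (real M * t)" by (simp add: Complex.DeMoivre)
    finally have "cmod (\<Sum>k<M. cis (real k * t)) = cmod (cis (real M * t) - 1) / cmod (cis t - 1)"
      by (simp add: norm_divide)
    also have "\<dots> = \<bar>sin (pi*\<delta>)\<bar> / \<bar>sin (pi*\<delta>/M)\<bar>"
      using M by (simp add: cmod_cis_minus1 t_def)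
    finally have eq: "FF M t = (sin (pi*\<delta>))^2 / ((real M)^2 * (sin (pi*\<delta>/M))^2)"
      unfolding FF_def by (simp add: power_divide)
    have sne: "sin (pi*\<delta>/M) \<noteq> 0"
    proof
      assume "sin (pi*\<delta>/M) = 0"
      then have "cmod (cis t - 1) = 0" by (simp add: cmod_cis_minus1 t_def)
      then show False using False by simp
    qed
    have "(sin (pi*\<delta>/M))^2 \<le> (pi*\<delta>/M)^2"
      using abs_sin_x_le_abs_x[of "pi*\<delta>/M"] by (simp only: abs_le_square_iff)
    then have "(real M)^2 * (sin (pi*\<delta>/M))^2 \<le> (pi*\<delta>)^2"
      using M by (simp add: power_divide field_simps)
    moreover have "0 < (real M)^2 * (sin (pi*\<delta>/M))^2" using sne M by simp
    ultimately have "(sin (pi*\<delta>))^2 / (pi*\<delta>)^2 \<le> (sin (pi*\<delta>))^2 / ((real M)^2 * (sin (pi*\<delta>/M))^2)"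
      using d M by (intro divide_left_mono mult_pos_pos) auto
    then show ?thesis using eq by (simp add: t_def power_divide)
  qed
qed

lemma FF_0: "M > 0 \<Longrightarrow> FF M 0 = 1"
  by (simp add: FF_def)

lemma FF_periodic: "FF M (t + 2*pi* of_int q) = FF M t"
proof -
  have "cis (real k * (t + 2*pi* of_int q)) = cis (real k * t)" for k
  proof -
    have "cis (real k * (t + 2*pi* of_int q)) = cis (real k * t) * cis (2*pi* of_int (int k * q))"
      by (simp add: algebra_simps cis_mult[symmetric])
    also have "cis (2*pi* of_int (int k * q)) = 1" by (rule cis_multiple_2pi) simp
    finally show ?thesis by simp
  qed
  then show ?thesis by (simp add: FF_def)
qed

lemma FF_neg: "FF M (-t) = FF M t"
proof -
  have e: "(\<Sum>k<M. cis (real k * -t)) = cnj (\<Sum>k<M. cis (real k * t))"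
    by (simp add: cis_cnj)
  show ?thesis by (simp only: FF_def e complex_mod_cnj)
qed

lemma parallelogram_cmod: "(cmod (u - v))^2 + (cmod (u + v))^2 = 2 * (cmod u)^2 + 2 * (cmod v)^2"
  unfolding cmod_power2 by (simp add: power2_eq_square algebra_simps)

lemma of_real_sin_cis: "complex_of_real (sin x) = (cis x - cis (-x)) / (2 * \<i>)"
  by (simp add: complex_eq_iff cis.code)

lemma of_real_cos_cis: "complex_of_real (cos x) = (cis x + cis (-x)) / 2"
  by (simp add: complex_eq_iff cis.code)

lemma amp_formula:
  fixes th :: real and M y :: nat assumes M: "M > 0"
  shows "(cmod (\<Sum>k<M. cis (- 2 * pi * real k * real y / real M)
                      * complex_of_real (sin ((2 * real k + 1) * th) / real M)))\<^sup>2
     + (cmod (\<Sum>k<M. cis (- 2 * pi * real k * real y / real M)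
                      * complex_of_real (cos ((2 * real k + 1) * th) / real M)))\<^sup>2
     = (FF M (2*th - 2*pi*real y/real M) + FF M (2*th + 2*pi*real y/real M)) / 2"
proof -
  define \<alpha> where "\<alpha> = 2*th - 2*pi*real y/real M"
  define \<beta> where "\<beta> = -2*th - 2*pi*real y/real M"
  define U where "U = (\<Sum>k<M. cis th * cis (real k * \<alpha>))"
  define V where "V = (\<Sum>k<M. cis (-th) * cis (real k * \<beta>))"
  have eA: "cis (- 2 * pi * real k * real y / real M) * cis ((2 * real k + 1) * th) = cis th * cis (real k * \<alpha>)" for k
    unfolding cis_mult \<alpha>_def by (rule arg_cong[where f=cis]) (simp add: field_simps)
  have eB: "cis (- 2 * pi * real k * real y / real M) * cis (-((2 * real k + 1) * th)) = cis (-th) * cis (real k * \<beta>)" for k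
    unfolding cis_mult \<beta>_def by (rule arg_cong[where f=cis]) (simp add: field_simps)
  have ps: "cis c * complex_of_real (sin x / real M) = (cis c * cis x - cis c * cis (-x)) / (2*\<i>* of_real M)" for c x
    by (simp add: of_real_sin_cis field_simps)
  have pc: "cis c * complex_of_real (cos x / real M) = (cis c * cis x + cis c * cis (-x)) / (2* of_real M)" for c x
    by (simp add: of_real_cos_cis distrib_left)
  have s1: "(\<Sum>k<M. cis (- 2 * pi * real k * real y / real M)
                      * complex_of_real (sin ((2 * real k + 1) * th) / real M)) = (U - V) / (2 * \<i> * of_real M)"
    unfolding U_def V_def sum_subtractf[symmetric] sum_divide_distrib
    unfolding ps eA eB by simp
  have s2: "(\<Sum>k<M. cis (- 2 * pi * real k * real y / real M)
                      * complex_of_real (cos ((2 * real k + 1) * th) / real M)) = (U + V) / (2 * of_real M)"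
    unfolding U_def V_def sum.distrib[symmetric] sum_divide_distrib
    unfolding pc eA eB by simp
  have cU: "cmod U = cmod (\<Sum>k<M. cis (real k * \<alpha>))"
    unfolding U_def sum_distrib_left[symmetric] by (simp add: norm_mult)
  have cV: "cmod V = cmod (\<Sum>k<M. cis (real k * \<beta>))"
    unfolding V_def sum_distrib_left[symmetric] by (simp add: norm_mult)
  have "(cmod ((U - V) / (2 * \<i> * of_real M)))^2 + (cmod ((U + V) / (2 * of_real M)))^2
      = ((cmod (U - V))^2 + (cmod (U + V))^2) / (4 * (real M)^2)"
  proof -
    have "cmod ((U - V) / (2 * \<i> * of_real M)) = cmod (U - V) / (2 * real M)"
      by (simp add: norm_divide norm_mult)
    moreover have "cmod ((U + V) / (2 * of_real M)) = cmod (U + V) / (2 * real M)"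
      by (simp add: norm_divide norm_mult)
    ultimately show ?thesis by (simp add: power_divide power_mult_distrib add_divide_distrib)
  qed
  also have "\<dots> = ((cmod U)^2 + (cmod V)^2) / (2 * (real M)^2)"
    unfolding parallelogram_cmod using M by (simp add: field_simps)
  also have "\<dots> = (FF M \<alpha> + FF M \<beta>) / 2"
    unfolding FF_def cU cV by (simp add: add_divide_distrib)
  also have "FF M \<beta> = FF M (2*th + 2*pi*real y/real M)"
    using FF_neg[of M "2*th + 2*pi*real y/real M"] by (simp add: \<beta>_def)
  finally show ?thesis unfolding s1 s2 \<alpha>_def by simp
qed

lemma root_sum:
  fixes d :: int and M :: nat assumes M: "M > 0" and dl: "\<bar>d\<bar> < int M"
  shows "(\<Sum>y<M. cis (2 * pi * of_int d * real y / real M)) = (if d = 0 then of_nat M else 0)"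
proof (cases "d = 0")
  case True then show ?thesis by simp
next
  case False
  define \<omega> where "\<omega> = cis (2 * pi * of_int d / real M)"
  have ne: "\<omega> \<noteq> 1"
  proof
    assume "\<omega> = 1"
    then obtain k :: int where "2 * pi * of_int d / real M = of_int k * 2 * pi"
      by (auto simp: \<omega>_def complex_eq_iff cos_one_2pi_int)
    with M have "of_int d = real M * of_int k" by (simp add: field_simps)
    then have dk: "d = int M * k" by (metis of_int_eq_iff of_int_mult of_int_of_nat_eq)
    with False have "k \<noteq> 0" by auto
    then have k1: "\<bar>k\<bar> \<ge> 1" by linarith
    have "\<bar>d\<bar> = int M * \<bar>k\<bar>" unfolding dk by (simp add: abs_mult)
    moreover have "int M * 1 \<le> int M * \<bar>k\<bar>" using k1 by (intro mult_left_mono) auto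
    ultimately have "\<bar>d\<bar> \<ge> int M" by simp
    with dl show False by simp
  qed
  have "(\<Sum>y<M. cis (2 * pi * of_int d * real y / real M)) = (\<Sum>y<M. \<omega> ^ y)"
    by (intro sum.cong refl) (auto simp: \<omega>_def Complex.DeMoivre mult_ac)
  also have "\<dots> = (\<omega> ^ M - 1) / (\<omega> - 1)"
    using ne by (rule geometric_sum)
  also have "\<omega> ^ M = cis (2 * pi * of_int d)" using M by (simp add: \<omega>_def Complex.DeMoivre)
  also have "\<dots> = 1" by (rule cis_multiple_2pi) simp
  finally show ?thesis using False by simp
qed

lemma parseval_FF:
  fixes c :: real assumes M: "M > 0"
  shows "(\<Sum>y<M. FF M (c - 2*pi*real y/real M)) = 1"
proof -
  have key: "complex_of_real ((cmod (\<Sum>k<M. cis (real k * (c - 2*pi*real y/real M))))^2)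
     = (\<Sum>k<M. \<Sum>l<M. cis ((real k - real l) * c) * cis (2 * pi * of_int (int l - int k) * real y / real M))" for y
  proof -
    have "complex_of_real ((cmod (\<Sum>k<M. cis (real k * (c - 2*pi*real y/real M))))^2)
        = (\<Sum>k<M. cis (real k * (c - 2*pi*real y/real M))) * cnj (\<Sum>k<M. cis (real k * (c - 2*pi*real y/real M)))"
      by (rule complex_norm_square)
    also have "\<dots> = (\<Sum>k<M. \<Sum>l<M. cis (real k * (c - 2*pi*real y/real M)) * cis (- (real l * (c - 2*pi*real y/real M))))"
      by (simp add: sum_distrib_left sum_distrib_right cis_cnj) (rule sum.swap)
    also have "\<dots> = (\<Sum>k<M. \<Sum>l<M. cis ((real k - real l) * c) * cis (2 * pi * of_int (int l - int k) * real y / real M))"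
      by (intro sum.cong refl, unfold cis_mult) (rule arg_cong[where f=cis], simp add: field_simps)
    finally show ?thesis .
  qed
  have "complex_of_real (\<Sum>y<M. (cmod (\<Sum>k<M. cis (real k * (c - 2*pi*real y/real M))))^2)
      = (\<Sum>k<M. \<Sum>l<M. cis ((real k - real l) * c) * (\<Sum>y<M. cis (2 * pi * of_int (int l - int k) * real y / real M)))"
    unfolding of_real_sum key sum_distrib_left
    apply (rule trans[OF sum.swap])
    apply (rule sum.cong[OF refl])
    apply (rule sum.swap)
    done
  also have "\<dots> = (\<Sum>k<M. \<Sum>l<M. cis ((real k - real l) * c) * (if int l - int k = 0 then of_nat M else 0))"
    by (intro sum.cong refl, subst root_sum) (use M in auto)
  also have "\<dots> = (\<Sum>k<M. of_nat M)"
    by (intro sum.cong refl) (simp add: if_distrib cong: if_cong)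
  also have "\<dots> = complex_of_real ((real M)^2)" by (simp add: power2_eq_square)
  finally have "(\<Sum>y<M. (cmod (\<Sum>k<M. cis (real k * (c - 2*pi*real y/real M))))^2) = (real M)^2"
    using of_real_eq_iff by blast
  then show ?thesis using M unfolding FF_def sum_divide_distrib[symmetric] by simp
qed

lemma parseval_FF':
  fixes c :: real assumes M: "M > 0"
  shows "(\<Sum>y<M. FF M (c + 2*pi*real y/real M)) = 1"
proof -
  have "FF M (c + 2*pi*real y/real M) = FF M (-c - 2*pi*real y/real M)" for y
    using FF_neg[of M "c + 2*pi*real y/real M"] by simp
  then show ?thesis using parseval_FF[OF M, of "-c"] by simp
qed

lemma ae_prob_eq:
  assumes "M > 0"
  shows "ae_prob M a y = (FF M (2*arcsin (sqrt a) - 2*pi*real y/real M) + FF M (2*arcsin (sqrt a) + 2*pi*real y/real M)) / 2"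
  unfolding ae_prob_def Let_def using amp_formula[OF assms] by simp

lemma FF_nonneg: "0 \<le> FF M t" by (simp add: FF_def)

lemma ae_prob_nonneg: "M > 0 \<Longrightarrow> 0 \<le> ae_prob M a y"
  by (simp add: ae_prob_eq FF_nonneg)

lemma sum_ae_prob: assumes "M > 0" shows "(\<Sum>y<M. ae_prob M a y) = 1"
proof -
  have "(\<Sum>y<M. ae_prob M a y) = ((\<Sum>y<M. FF M (2*arcsin (sqrt a) - 2*pi*real y/real M)) + (\<Sum>y<M. FF M (2*arcsin (sqrt a) + 2*pi*real y/real M))) / 2"
    unfolding ae_prob_eq[OF assms] sum_divide_distrib[symmetric] sum.distrib ..
  also have "\<dots> = 1" using parseval_FF[OF assms] parseval_FF'[OF assms] by simp
  finally show ?thesis .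
qed

lemma pmf_ae_pmf:
  assumes M: "M > 0"
  shows "pmf (ae_pmf M a) y = (if y < M then ae_prob M a y else 0)"
proof -
  let ?f = "\<lambda>y. if y < M then ae_prob M a y else 0"
  have nn: "\<And>y. 0 \<le> ?f y" using ae_prob_nonneg[OF M] by simp
  have "(\<integral>\<^sup>+y. ennreal (?f y) \<partial>count_space UNIV) = (\<Sum>y\<in>{..<M}. ennreal (?f y))"
    by (rule nn_integral_count_space') auto
  also have "\<dots> = ennreal (\<Sum>y\<in>{..<M}. ?f y)" using nn by (rule sum_ennreal)
  also have "(\<Sum>y\<in>{..<M}. ?f y) = 1" using sum_ae_prob[OF M] by simp
  finally have "(\<integral>\<^sup>+y. ennreal (?f y) \<partial>count_space UNIV) = 1" by simp
  then show ?thesis unfolding ae_pmf_def using nn by (subst pmf_embed_pmf) auto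
qed

lemma sin2_lip: fixes u v :: real shows "\<bar>(sin u)^2 - (sin v)^2\<bar> \<le> \<bar>u - v\<bar>"
proof -
  have "(sin u)^2 - (sin v)^2 = sin (u - v) * sin (u + v)"
  proof -
    have "sin (u - v) * sin (u + v) = (sin u * cos v)^2 - (cos u * sin v)^2"
    proof -
      have d: "sin (u - v) = sin u * cos v - cos u * sin v" using sin_add[of u "-v"] by simp
      show ?thesis unfolding d sin_add by (simp add: power2_eq_square algebra_simps)
    qed
    also have "\<dots> = (sin u)^2 * (1 - (sin v)^2) - (1 - (sin u)^2) * (sin v)^2"
      by (simp add: power_mult_distrib cos_squared_eq)
    finally show ?thesis by (simp add: algebra_simps)
  qed
  then have "\<bar>(sin u)^2 - (sin v)^2\<bar> = \<bar>sin (u - v)\<bar> * \<bar>sin (u + v)\<bar>" by (simp add: abs_mult)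
  also have "\<dots> \<le> \<bar>sin (u - v)\<bar> * 1" by (intro mult_left_mono) auto
  also have "\<dots> \<le> \<bar>u - v\<bar>" using abs_sin_x_le_abs_x by simp
  finally show ?thesis .
qed

lemma sin2_shift: fixes x :: real shows "(sin (x - of_int j * pi))^2 = (sin x)^2"
proof -
  have s: "sin (of_int j * pi) = 0" by (auto simp: sin_zero_iff_int2)
  have c: "(cos (of_int j * pi))^2 = 1" using sin_cos_squared_add[of "of_int j * pi"] s by simp
  show ?thesis by (simp add: sin_diff s power_mult_distrib c)
qed

lemma FF_lb_shift:
  fixes g e :: real and j :: int
  assumes M: "M > 0" and e: "e^2 = (g - of_int j)^2" "e \<noteq> 0"
  shows "(sin (pi*g) / (pi*e))^2 \<le> FF M (2*pi*(g - of_int j)/real M)"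
proof -
  have d: "g - of_int j \<noteq> 0" using e by auto
  have "(sin (pi*(g - of_int j)) / (pi*(g - of_int j)))^2 \<le> FF M (2*pi*(g - of_int j)/real M)"
    using FF_lb[OF M d] by simp
  moreover have "(sin (pi*(g - of_int j)))^2 = (sin (pi*g))^2"
    using sin2_shift[of "pi*g" j] by (simp add: right_diff_distrib mult.commute)
  moreover have "(pi*(g - of_int j))^2 = (pi*e)^2" using e by (simp add: power_mult_distrib)
  ultimately show ?thesis by (simp add: power_divide)
qed

lemma Q_bound:
  fixes g :: real assumes M: "M > 0" and g: "0 \<le> g" "g < 1"
  shows "4/5 \<le> (\<Sum>j\<in>{-1,0,1,2::int}. FF M (2*pi*(g - of_int j)/real M))"
proof -
  have sumeq: "(\<Sum>j\<in>{-1,0,1,2::int}. FF M (2*pi*(g - of_int j)/real M))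
      = FF M (2*pi*(g - of_int (-1))/real M) + FF M (2*pi*(g - of_int 0)/real M)
        + FF M (2*pi*(g - of_int 1)/real M) + FF M (2*pi*(g - of_int 2)/real M)"
    by simp
  show ?thesis
  proof (cases "g = 0")
    case True
    have "FF M (2*pi*(g - of_int 0)/real M) = 1" using True FF_0[OF M] by simp
    moreover have "0 \<le> FF M (2*pi*(g - of_int (-1))/real M)" "0 \<le> FF M (2*pi*(g - of_int 1)/real M)"
      "0 \<le> FF M (2*pi*(g - of_int 2)/real M)" by (rule FF_nonneg)+
    ultimately show ?thesis unfolding sumeq by linarith
  next
    case False
    then have gp: "0 < g" using g by simp
    have t1: "(sin (pi*g) / (pi*(1+g)))^2 \<le> FF M (2*pi*(g - of_int (-1))/real M)"
      using g by (intro FF_lb_shift[OF M]) (auto simp: algebra_simps)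
    have t2: "(sin (pi*g) / (pi*g))^2 \<le> FF M (2*pi*(g - of_int 0)/real M)"
      using gp by (intro FF_lb_shift[OF M]) (auto simp: algebra_simps)
    have t3: "(sin (pi*g) / (pi*(1-g)))^2 \<le> FF M (2*pi*(g - of_int 1)/real M)"
      using g by (intro FF_lb_shift[OF M]) (auto simp: power2_eq_square algebra_simps)
    have t4: "(sin (pi*g) / (pi*(2-g)))^2 \<le> FF M (2*pi*(g - of_int 2)/real M)"
      using g by (intro FF_lb_shift[OF M]) (auto simp: power2_eq_square algebra_simps)
    show ?thesis unfolding sumeq using hsum[OF gp g(2)] t1 t2 t3 t4 by linarith
  qed
qed

lemma ae_success:
  assumes M4: "M \<ge> 4" and a: "0 \<le> a" "a \<le> 1"
  shows "4/5 \<le> measure_pmf.prob (ae_pmf M a) {m. \<bar>(sin (pi * real m / real M))^2 - a\<bar> \<le> 2*pi/real M}"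
proof -
  have M: "M > 0" using M4 by simp
  define th where "th = arcsin (sqrt a)"
  have sth: "(sin th)^2 = a" unfolding th_def using a by (subst sin_arcsin) (auto intro: order_trans[OF _ real_sqrt_ge_zero])
  define \<omega> where "\<omega> = real M * th / pi"
  define n0 where "n0 = \<lfloor>\<omega>\<rfloor>"
  define g where "g = \<omega> - of_int n0"
  have g: "0 \<le> g" "g < 1" unfolding g_def n0_def by linarith+
  have th2: "2*th = 2*pi*\<omega>/real M" unfolding \<omega>_def using M by simp
  define J where "J = {-1,0,1,2::int}"
  define r where "r j = nat ((n0 + j) mod int M)" for j
  define s where "s j = nat ((-(n0 + j)) mod int M)" for j
  define G where "G = {m. \<bar>(sin (pi * real m / real M))^2 - a\<bar> \<le> 2*pi/real M}"
  have rdef: "real (r j) = of_int (n0 + j) - real M * of_int ((n0 + j) div int M)" for j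
  proof -
    have "(n0 + j) mod int M = (n0 + j) - int M * ((n0 + j) div int M)" by (simp add: mod_div_mult_eq minus_div_mult_eq_mod[symmetric])
    moreover have "0 \<le> (n0 + j) mod int M" using M by simp
    ultimately show ?thesis unfolding r_def by (simp add: of_nat_nat)
  qed
  have sdef: "real (s j) = - of_int (n0 + j) - real M * of_int ((-(n0 + j)) div int M)" for j
  proof -
    have "(-(n0 + j)) mod int M = (-(n0 + j)) - int M * ((-(n0 + j)) div int M)" by (simp add: minus_div_mult_eq_mod[symmetric])
    moreover have "0 \<le> (-(n0 + j)) mod int M" using M by simp
    ultimately show ?thesis unfolding s_def by (simp add: of_nat_nat)
  qed
  have rlt: "r j < M" for j unfolding r_def using M by (simp add: nat_less_iff)
  have slt: "s j < M" for j unfolding s_def using M by (simp add: nat_less_iff)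
  have close: "\<bar>(sin (pi * of_int (n0 + j) / real M))^2 - a\<bar> \<le> 2*pi/real M" if "j \<in> J" for j
  proof -
    have "\<bar>(sin (pi * of_int (n0 + j) / real M))^2 - a\<bar> \<le> \<bar>pi * of_int (n0 + j) / real M - th\<bar>"
      using sin2_lip[of "pi * of_int (n0 + j) / real M" th] sth by simp
    also have "pi * of_int (n0 + j) / real M - th = pi / real M * (of_int j - g)"
      unfolding g_def \<omega>_def using M by (simp add: field_simps)
    also have "\<bar>pi / real M * (of_int j - g)\<bar> = pi / real M * \<bar>of_int j - g\<bar>"
      using M by (simp add: abs_mult)
    also have "\<dots> \<le> pi / real M * 2"
      using that g unfolding J_def by (intro mult_left_mono) auto
    finally show ?thesis by (simp add: mult.commute)
  qed
  have rG: "r j \<in> G" if "j \<in> J" for j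
  proof -
    have "pi * real (r j) / real M = pi * of_int (n0 + j) / real M - of_int ((n0 + j) div int M) * pi"
      unfolding rdef using M by (simp add: field_simps)
    then have "(sin (pi * real (r j) / real M))^2 = (sin (pi * of_int (n0 + j) / real M))^2"
      using sin2_shift by simp
    then show ?thesis using close[OF that] unfolding G_def by simp
  qed
  have sG: "s j \<in> G" if "j \<in> J" for j
  proof -
    have "pi * real (s j) / real M = - (pi * of_int (n0 + j) / real M) - of_int ((-(n0 + j)) div int M) * pi"
      unfolding sdef using M by (simp add: field_simps)
    then have "(sin (pi * real (s j) / real M))^2 = (sin (- (pi * of_int (n0 + j) / real M)))^2"
      using sin2_shift by simp
    also have "\<dots> = (sin (pi * of_int (n0 + j) / real M))^2" by simp
    finally show ?thesis using close[OF that] unfolding G_def by simp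
  qed
  have injaux: "i = j" if "i \<in> J" "j \<in> J" "int M dvd (i - j)" for i j
  proof (rule ccontr)
    assume "i \<noteq> j"
    then have "\<bar>int M\<bar> \<le> \<bar>i - j\<bar>" using that(3) by (intro dvd_imp_le_int) auto
    moreover have "\<bar>i - j\<bar> \<le> 3" using that(1,2) unfolding J_def by auto
    ultimately show False using M4 by simp
  qed
  have injr: "inj_on r J"
  proof (rule inj_onI)
    fix i j assume ij: "i \<in> J" "j \<in> J" "r i = r j"
    then have "(n0 + i) mod int M = (n0 + j) mod int M" unfolding r_def using M
      by (metis eq_nat_nat_iff pos_mod_sign of_nat_0_less_iff)
    then have "int M dvd (n0 + i) - (n0 + j)" by (simp add: mod_eq_dvd_iff)
    then show "i = j" using injaux ij by simp
  qed
  have injs: "inj_on s J"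
  proof (rule inj_onI)
    fix i j assume ij: "i \<in> J" "j \<in> J" "s i = s j"
    then have "(-(n0 + i)) mod int M = (-(n0 + j)) mod int M" unfolding s_def using M
      by (metis eq_nat_nat_iff pos_mod_sign of_nat_0_less_iff)
    then have "int M dvd (-(n0 + i)) - (-(n0 + j))" by (simp add: mod_eq_dvd_iff)
    then have "int M dvd (j - i)" by simp
    then show "i = j" using injaux[OF ij(2) ij(1)] by simp
  qed
  define F1 where "F1 y = FF M (2*th - 2*pi*real y/real M)" for y :: nat
  define F2 where "F2 y = FF M (2*th + 2*pi*real y/real M)" for y :: nat
  define Q where "Q = (\<Sum>j\<in>J. FF M (2*pi*(g - of_int j)/real M))"
  have F1r: "F1 (r j) = FF M (2*pi*(g - of_int j)/real M)" for j
  proof -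
    have "2*th - 2*pi*real (r j)/real M = 2*pi*(g - of_int j)/real M + 2 * pi * of_int ((n0 + j) div int M)"
      unfolding th2 rdef g_def using M by (simp add: field_simps)
    then show ?thesis unfolding F1_def by (simp add: FF_periodic)
  qed
  have F2s: "F2 (s j) = FF M (2*pi*(g - of_int j)/real M)" for j
  proof -
    have "2*th + 2*pi*real (s j)/real M = 2*pi*(g - of_int j)/real M + 2 * pi * of_int (- ((-(n0 + j)) div int M))"
      unfolding th2 sdef g_def using M by (simp add: field_simps)
    then show ?thesis unfolding F2_def by (simp only: FF_periodic)
  qed
  have F1nn: "0 \<le> F1 y" for y unfolding F1_def by (rule FF_nonneg)
  have F2nn: "0 \<le> F2 y" for y unfolding F2_def by (rule FF_nonneg)
  define R where "R = r ` J \<union> s ` J"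
  have finR: "finite R" unfolding R_def J_def by simp
  have RG: "R \<subseteq> G" unfolding R_def using rG sG by auto
  have RM: "\<forall>y\<in>R. y < M" unfolding R_def using rlt slt by auto
  have "measure_pmf.prob (ae_pmf M a) R = (\<Sum>y\<in>R. pmf (ae_pmf M a) y)"
    using finR by (rule measure_measure_pmf_finite)
  also have "\<dots> = (\<Sum>y\<in>R. (F1 y + F2 y) / 2)"
    using RM by (intro sum.cong refl) (simp add: pmf_ae_pmf[OF M] ae_prob_eq[OF M] F1_def F2_def th_def)
  also have "\<dots> = ((\<Sum>y\<in>R. F1 y) + (\<Sum>y\<in>R. F2 y)) / 2"
    by (simp add: sum.distrib sum_divide_distrib[symmetric])
  finally have pR: "measure_pmf.prob (ae_pmf M a) R = ((\<Sum>y\<in>R. F1 y) + (\<Sum>y\<in>R. F2 y)) / 2" .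
  have "(\<Sum>y\<in>r ` J. F1 y) \<le> (\<Sum>y\<in>R. F1 y)"
    using finR F1nn by (intro sum_mono2) (auto simp: R_def)
  moreover have "(\<Sum>y\<in>r ` J. F1 y) = Q"
    unfolding Q_def using injr by (simp add: sum.reindex F1r)
  moreover have "(\<Sum>y\<in>s ` J. F2 y) \<le> (\<Sum>y\<in>R. F2 y)"
    using finR F2nn by (intro sum_mono2) (auto simp: R_def)
  moreover have "(\<Sum>y\<in>s ` J. F2 y) = Q"
    unfolding Q_def using injs by (simp add: sum.reindex F2s)
  ultimately have "2 * Q \<le> (\<Sum>y\<in>R. F1 y) + (\<Sum>y\<in>R. F2 y)" by linarith
  moreover have "4/5 \<le> Q" unfolding Q_def J_def using Q_bound[OF M g] .
  ultimately have "4/5 \<le> measure_pmf.prob (ae_pmf M a) R" unfolding pR by simp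
  also have "\<dots> \<le> measure_pmf.prob (ae_pmf M a) G"
    using RG by (intro measure_pmf.finite_measure_mono) auto
  finally show ?thesis unfolding G_def .
qed

lemma iid_length: "xs \<in> set_pmf (iid_pmf n D) \<Longrightarrow> length xs = n"
  by (induction n arbitrary: xs) auto

lemma iid_mgf:
  "(\<integral>\<^sup>+xs. ennreal (4 ^ length (filter B xs)) \<partial>measure_pmf (iid_pmf n D))
     = (\<integral>\<^sup>+x. ennreal (if B x then 4 else 1) \<partial>measure_pmf D) ^ n"
proof (induction n)
  case 0 then show ?case by simp
next
  case (Suc n)
  have "(\<integral>\<^sup>+xs. ennreal (4 ^ length (filter B xs)) \<partial>measure_pmf (iid_pmf (Suc n) D))
      = (\<integral>\<^sup>+x. \<integral>\<^sup>+xs. ennreal (if B x then 4 else 1) * ennreal (4 ^ length (filter B xs)) \<partial>measure_pmf (iid_pmf n D) \<partial>measure_pmf D)"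
    apply simp
    apply (intro nn_integral_cong)
    apply (simp add: ennreal_mult[symmetric])
    done
  also have "\<dots> = (\<integral>\<^sup>+x. ennreal (if B x then 4 else 1) * (\<integral>\<^sup>+xs. ennreal (4 ^ length (filter B xs)) \<partial>measure_pmf (iid_pmf n D)) \<partial>measure_pmf D)"
    by (subst nn_integral_cmult) auto
  also have "\<dots> = (\<integral>\<^sup>+x. ennreal (if B x then 4 else 1) \<partial>measure_pmf D) * (\<integral>\<^sup>+xs. ennreal (4 ^ length (filter B xs)) \<partial>measure_pmf (iid_pmf n D))"
    by (subst nn_integral_multc) auto
  finally show ?case using Suc by (simp add: mult.commute)
qed

lemma mgf_one:
  assumes "measure_pmf.prob D {x. B x} \<le> 1/5"
  shows "(\<integral>\<^sup>+x. ennreal (if B x then 4 else 1) \<partial>measure_pmf D) \<le> ennreal (8/5)"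
proof -
  have "(\<integral>\<^sup>+x. ennreal (if B x then 4 else 1) \<partial>measure_pmf D)
      = (\<integral>\<^sup>+x. 1 + 3 * indicator {x. B x} x \<partial>measure_pmf D)"
    by (intro nn_integral_cong) (auto simp: indicator_def)
  also have "\<dots> = (\<integral>\<^sup>+x. 1 \<partial>measure_pmf D) + (\<integral>\<^sup>+x. 3 * indicator {x. B x} x \<partial>measure_pmf D)"
    by (subst nn_integral_add) auto
  also have "\<dots> = 1 + 3 * emeasure (measure_pmf D) {x. B x}"
    by (subst nn_integral_cmult_indicator) (auto simp: measure_pmf.emeasure_space_1)
  also have "\<dots> = ennreal (1 + 3 * measure_pmf.prob D {x. B x})"
    by (simp add: measure_pmf.emeasure_eq_measure ennreal_plus ennreal_mult)
  also have "\<dots> \<le> ennreal (8/5)" using assms by (intro ennreal_leI) simp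
  finally show ?thesis .
qed

lemma iid_tail:
  assumes "measure_pmf.prob D {x. B x} \<le> 1/5"
  shows "measure_pmf.prob (iid_pmf n D) {xs. n \<le> 2 * length (filter B xs)} \<le> (4/5)^n"
proof -
  let ?S = "{xs. n \<le> 2 * length (filter B xs)}"
  have pt: "ennreal (2^n) * indicator ?S xs \<le> ennreal (4 ^ length (filter B xs))" for xs
  proof (cases "xs \<in> ?S")
    case True
    then have "(2::real)^n \<le> 2^(2 * length (filter B xs))" by (intro power_increasing) auto
    also have "\<dots> = 4 ^ length (filter B xs)" by (simp add: power_mult)
    finally have "ennreal (2^n) \<le> ennreal (4 ^ length (filter B xs))" by (rule ennreal_leI)
    moreover have "ennreal (2^n) * indicator ?S xs = ennreal (2^n)" using True by simp
    ultimately show ?thesis by simp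
  qed auto
  have "ennreal (2^n) * emeasure (measure_pmf (iid_pmf n D)) ?S
      = (\<integral>\<^sup>+xs. ennreal (2^n) * indicator ?S xs \<partial>measure_pmf (iid_pmf n D))"
    by (subst nn_integral_cmult_indicator) auto
  also have "\<dots> \<le> (\<integral>\<^sup>+xs. ennreal (4 ^ length (filter B xs)) \<partial>measure_pmf (iid_pmf n D))"
    by (intro nn_integral_mono pt)
  also have "\<dots> = (\<integral>\<^sup>+x. ennreal (if B x then 4 else 1) \<partial>measure_pmf D) ^ n"
    by (rule iid_mgf)
  also have "\<dots> \<le> ennreal (8/5) ^ n"
    by (rule power_mono[OF mgf_one[OF assms]]) simp
  finally have "ennreal (2^n * measure_pmf.prob (iid_pmf n D) ?S) \<le> ennreal ((8/5)^n)"
    by (simp add: measure_pmf.emeasure_eq_measure ennreal_mult ennreal_power)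
  then have "2^n * measure_pmf.prob (iid_pmf n D) ?S \<le> (8/5)^n"
    by (subst (asm) ennreal_le_iff) auto
  then have "measure_pmf.prob (iid_pmf n D) ?S \<le> (8/5)^n / 2^n"
    by (simp add: field_simps)
  also have "(8/5)^n / 2^n = ((4/5)::real)^n" by (simp add: power_divide[symmetric])
  finally show ?thesis .
qed

lemma aux1: "a + 1 \<le> (c::nat) \<Longrightarrow> k \<le> 2*(a+1) \<Longrightarrow> 2*c < k \<Longrightarrow> False" by arith
lemma aux2: "k - a \<le> (c::nat) \<Longrightarrow> k \<le> 2*(k-a) \<Longrightarrow> 2*c < k \<Longrightarrow> False" by arith

lemma median_in:
  fixes xs :: "real list" and lo hi :: real
  assumes k: "length xs = k" "k > 0"
    and few: "2 * length (filter (\<lambda>x. \<not> (lo \<le> x \<and> x \<le> hi)) xs) < k"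
  shows "lo \<le> median xs \<and> median xs \<le> hi"
proof -
  define ys where "ys = sort xs"
  define i where "i = (k - 1) div 2"
  define P where "P = (\<lambda>x::real. \<not> (lo \<le> x \<and> x \<le> hi))"
  have few': "2 * length (filter P xs) < k" using few unfolding P_def .
  have ly: "length ys = k" using k by (simp add: ys_def)
  have sy: "sorted ys" by (simp add: ys_def)
  have il: "i < k" using k by (simp add: i_def)
  have cnt: "length (filter P ys) = length (filter P xs)"
  proof -
    have "mset (filter P ys) = mset (filter P xs)" by (simp add: ys_def)
    then show ?thesis by (metis size_mset)
  qed
  have cardle: "card {j. j < k \<and> P (ys ! j)} \<le> length (filter P ys)"
    by (simp add: length_filter_conv_card ly)
  have med: "median xs = ys ! i" by (simp add: median_def ys_def i_def k)
  have "lo \<le> ys ! i"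
  proof (rule ccontr)
    assume "\<not> lo \<le> ys ! i"
    then have "\<forall>j\<in>{..i}. P (ys ! j)"
      using sy il ly unfolding P_def by (auto dest: sorted_nth_mono[of ys _ i])
    then have "{..i} \<subseteq> {j. j < k \<and> P (ys ! j)}" using il by auto
    then have "card {..i} \<le> card {j. j < k \<and> P (ys ! j)}" by (intro card_mono) auto
    then have "i + 1 \<le> length (filter P xs)" using cardle cnt by simp
    moreover have "k \<le> 2 * (i + 1)" unfolding i_def by presburger
    ultimately show False using few' by (rule aux1)
  qed
  moreover have "ys ! i \<le> hi"
  proof (rule ccontr)
    assume "\<not> ys ! i \<le> hi"
    then have "\<forall>j\<in>{i..<k}. P (ys ! j)"
      using sy il ly unfolding P_def by (auto dest: sorted_nth_mono[of ys i])
    then have "{i..<k} \<subseteq> {j. j < k \<and> P (ys ! j)}" by auto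
    then have "card {i..<k} \<le> card {j. j < k \<and> P (ys ! j)}" by (intro card_mono) auto
    then have "k - i \<le> length (filter P xs)" using cardle cnt by simp
    moreover have "k \<le> 2 * (k - i)" unfolding i_def by presburger
    ultimately show False using few' by (rule aux2)
  qed
  ultimately show ?thesis using med by simp
qed

lemma ellL_bounds: "L > 0 \<Longrightarrow> -L \<le> ellL L p q w \<and> ellL L p q w \<le> L"
  by (auto simp: ellL_def clipL_def)

lemma gL_bounds: "L > 0 \<Longrightarrow> 0 \<le> gL L p q w \<and> gL L p q w \<le> 1"
  using ellL_bounds[of L p q w] by (auto simp: gL_def field_simps)

lemma amp_bounds:
  assumes "\<forall>w\<in>W. 0 \<le> p w" "sum p W = 1" "L > 0"
  shows "0 \<le> amp W L p q \<and> amp W L p q \<le> 1"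
proof
  have g0: "0 \<le> gL L p q w" for w using gL_bounds[OF assms(3), of p q w] by linarith
  show "0 \<le> amp W L p q" unfolding amp_def using assms g0
    by (intro sum_nonneg mult_nonneg_nonneg) auto
  have g1: "gL L p q w \<le> 1" for w using gL_bounds[OF assms(3), of p q w] by linarith
  have "amp W L p q \<le> (\<Sum>w\<in>W. p w * 1)" unfolding amp_def using assms g1
    by (intro sum_mono mult_left_mono) auto
  then show "amp W L p q \<le> 1" using assms by simp
qed

lemma KLclip_amp:
  assumes "sum p W = 1" "L > 0"
  shows "KLclip W L p q = 2 * L * amp W L p q - L"
proof -
  have "2 * L * amp W L p q = (\<Sum>w\<in>W. p w * ellL L p q w + L * p w)"
    unfolding amp_def gL_def sum_distrib_left using assms by (intro sum.cong) (auto simp: field_simps)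
  also have "\<dots> = KLclip W L p q + L * sum p W"
    by (simp add: sum.distrib KLclip_def sum_distrib_left)
  finally show ?thesis using assms by simp
qed

lemma qkla_M_ge:
  assumes "L > 0" "\<tau> > 0"
  shows "4 * pi * L / \<tau> \<le> real (qkla_M L \<tau>)"
proof -
  define N where "N = real (nat \<lceil>4 * pi * L / \<tau>\<rceil>)"
  have pos: "0 < 4 * pi * L / \<tau>" using assms by simp
  have N1: "4 * pi * L / \<tau> \<le> N" unfolding N_def by linarith
  have c1: "(1::int) \<le> \<lceil>4 * pi * L / \<tau>\<rceil>" using pos by (simp add: le_ceiling_iff)
  have Npos: "1 \<le> N" using c1 unfolding N_def by simp
  have lg: "0 \<le> log 2 N" using Npos by simp
  have "N = 2 powr (log 2 N)" using Npos by simp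
  also have "\<dots> \<le> 2 powr (real (nat \<lceil>log 2 N\<rceil>))"
    by (intro powr_mono) linarith+
  also have "\<dots> = real (qkla_M L \<tau>)" unfolding qkla_M_def N_def
    by (simp add: powr_realpow)
  finally show ?thesis using N1 by simp
qed

lemma qkla_k_bounds:
  assumes "0 < d" "d < 1"
  shows "1 \<le> qkla_k d" "(4/5::real) ^ qkla_k d \<le> d"
proof -
  have l: "0 < ln (1/d)" using assms by simp
  have kge: "5 * ln (1/d) \<le> real (qkla_k d)" unfolding qkla_k_def by linarith
  then show "1 \<le> qkla_k d" using l by simp
  have e: "1 \<le> 5 * ln (5/4::real)"
  proof -
    have "(5/4::real)^5 = 3125/1024" by (simp add: power_divide)
    then have "exp 1 \<le> (5/4::real)^5" using e_less_272 by simp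
    then have "ln (exp 1) \<le> ln ((5/4::real)^5)" by (subst ln_le_cancel_iff) auto
    then show ?thesis by (simp add: ln_realpow)
  qed
  have "ln ((4/5::real) ^ qkla_k d) = - (real (qkla_k d) * ln (5/4))"
    by (simp add: ln_realpow ln_div algebra_simps)
  also have "\<dots> \<le> - (5 * ln (1/d) * ln (5/4))"
    using kge by (intro le_imp_neg_le mult_right_mono) auto
  also have "\<dots> = - (ln (1/d) * (5 * ln (5/4)))" by simp
  also have "\<dots> \<le> - (ln (1/d) * 1)"
    using e l by (intro le_imp_neg_le mult_left_mono) auto
  also have "\<dots> = ln d" using assms by (simp add: ln_div)
  finally show "(4/5::real) ^ qkla_k d \<le> d" using assms by (subst (asm) ln_le_cancel_iff) auto
qed

lemma len_filter_mono: "(\<And>x. P x \<Longrightarrow> Q x) \<Longrightarrow> length (filter P xs) \<le> length (filter Q xs)"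
  by (induction xs) auto

lemma qkla_good:
  assumes pnn: "\<forall>w\<in>W. 0 \<le> p w" and psum: "sum p W = 1"
    and L: "L > 0" and tau: "\<tau> > 0" and d: "0 < d" "d < 1"
  shows "1 - d \<le> measure_pmf.prob (QKLA W p q \<tau> d L) {v. \<bar>v - KLclip W L p q\<bar> \<le> \<tau>}"
proof -
  define a where "a = amp W L p q"
  define M where "M = qkla_M L \<tau>"
  define k where "k = qkla_k d"
  define D where "D = ae_pmf M a"
  define f where "f ms = 2 * L * median (map (\<lambda>m. (sin (pi * real m / real M))\<^sup>2) ms) - L" for ms
  have a01: "0 \<le> a" "a \<le> 1" using amp_bounds[OF pnn psum L] by (auto simp: a_def)
  have KLa: "KLclip W L p q = 2 * L * a - L" using KLclip_amp[OF psum L] by (simp add: a_def)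
  have Mge: "4 * pi * L / \<tau> \<le> real M" unfolding M_def using qkla_M_ge[OF L tau] .
  have k1: "1 \<le> k" and kd: "(4/5::real) ^ k \<le> d" unfolding k_def using qkla_k_bounds[OF d] by auto
  have Q: "QKLA W p q \<tau> d L = map_pmf f (iid_pmf k D)"
    unfolding QKLA_def f_def M_def k_def D_def a_def ..
  define S where "S = {v. \<bar>v - KLclip W L p q\<bar> \<le> \<tau>}"
  obtain B lo hi where B: "measure_pmf.prob D {m. B m} \<le> 1/5"
    and Bgood: "\<And>m. \<not> B m \<Longrightarrow> lo \<le> (sin (pi * real m / real M))\<^sup>2 \<and> (sin (pi * real m / real M))\<^sup>2 \<le> hi"
    and Iok: "\<And>x. lo \<le> x \<Longrightarrow> x \<le> hi \<Longrightarrow> \<bar>2 * L * x - L - KLclip W L p q\<bar> \<le> \<tau>"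
  proof (cases "4 \<le> M")
    case True
    define B where "B m = (\<not> \<bar>(sin (pi * real m / real M))\<^sup>2 - a\<bar> \<le> 2*pi/real M)" for m
    have "4/5 \<le> measure_pmf.prob D {m. \<not> B m}"
      unfolding D_def B_def using ae_success[OF True a01] by simp
    moreover have "measure_pmf.prob D {m. B m} = 1 - measure_pmf.prob D {m. \<not> B m}"
    proof -
      have "UNIV - {m. \<not> B m} = {m. B m}" by auto
      then show ?thesis using measure_pmf.prob_compl[of "{m. \<not> B m}" D] by simp
    qed
    ultimately have b: "measure_pmf.prob D {m. B m} \<le> 1/5" by simp
    have Mpos: "0 < real M" using True by simp
    show ?thesis
    proof (rule that[OF b, of "a - 2*pi/real M" "a + 2*pi/real M"])
      fix m assume "\<not> B m"
      then show "a - 2*pi/real M \<le> (sin (pi * real m / real M))\<^sup>2 \<and> (sin (pi * real m / real M))\<^sup>2 \<le> a + 2*pi/real M"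
        unfolding B_def by linarith
    next
      fix x assume x: "a - 2*pi/real M \<le> x" "x \<le> a + 2*pi/real M"
      have "\<bar>2 * L * x - L - KLclip W L p q\<bar> = 2 * L * \<bar>x - a\<bar>"
      proof -
        have "2 * L * x - L - (2 * L * a - L) = (2 * L) * (x - a)" by (simp add: algebra_simps)
        then show ?thesis unfolding KLa using L by (simp add: abs_mult)
      qed
      also have "\<dots> \<le> 2 * L * (2*pi/real M)"
        using x L by (intro mult_left_mono) auto
      also have "\<dots> \<le> \<tau>"
      proof -
        have "4 * pi * L \<le> \<tau> * real M" using Mge tau by (simp add: field_simps)
        then show ?thesis using Mpos by (simp add: field_simps)
      qed
      finally show "\<bar>2 * L * x - L - KLclip W L p q\<bar> \<le> \<tau>" .
    qed
  next
    case False
    then have "real M < 4" by simp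
    then have "4 * pi * L / \<tau> < 4" using Mge by linarith
    then have piL: "pi * L < \<tau>" using tau by (simp add: field_simps)
    have "2 * L \<le> pi * L" using L pi_gt3 by (intro mult_right_mono) auto
    with piL have tL: "2 * L < \<tau>" by simp
    show ?thesis
    proof (rule that[of "\<lambda>_. False" 0 1])
      show "measure_pmf.prob D {m. False} \<le> 1/5" by simp
    next
      fix m :: nat
      show "0 \<le> (sin (pi * real m / real M))\<^sup>2 \<and> (sin (pi * real m / real M))\<^sup>2 \<le> 1"
        by (simp add: abs_square_le_1)
    next
      fix x :: real assume x: "0 \<le> x" "x \<le> 1"
      have "-L \<le> KLclip W L p q" "KLclip W L p q \<le> L" unfolding KLa using a01 L
        by (simp_all add: mult_left_le)
      moreover have "-L \<le> 2 * L * x - L" "2 * L * x - L \<le> L" using x L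
        by (simp_all add: mult_left_le)
      ultimately show "\<bar>2 * L * x - L - KLclip W L p q\<bar> \<le> \<tau>" using tL by linarith
    qed
  qed
  define Bad where "Bad = {ms. k \<le> 2 * length (filter B ms)}"
  have tail: "measure_pmf.prob (iid_pmf k D) Bad \<le> d"
    unfolding Bad_def using iid_tail[OF B, of k] kd by linarith
  have goodlist: "f ms \<in> S" if ms: "ms \<in> set_pmf (iid_pmf k D)" "ms \<notin> Bad" for ms
  proof -
    let ?xs = "map (\<lambda>m. (sin (pi * real m / real M))\<^sup>2) ms"
    have len: "length ?xs = k" using iid_length[OF ms(1)] by simp
    have "length (filter (\<lambda>x. \<not> (lo \<le> x \<and> x \<le> hi)) ?xs) \<le> length (filter B ms)"
    proof -
      have "length (filter (\<lambda>x. \<not> (lo \<le> x \<and> x \<le> hi)) ?xs)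
          = length (filter (\<lambda>m. \<not> (lo \<le> (sin (pi * real m / real M))\<^sup>2 \<and> (sin (pi * real m / real M))\<^sup>2 \<le> hi)) ms)"
        by (simp add: filter_map o_def)
      also have "\<dots> \<le> length (filter B ms)"
        using Bgood by (intro len_filter_mono) blast
      finally show ?thesis .
    qed
    then have few: "2 * length (filter (\<lambda>x. \<not> (lo \<le> x \<and> x \<le> hi)) ?xs) < k"
      using ms(2) unfolding Bad_def by simp
    have "lo \<le> median ?xs \<and> median ?xs \<le> hi"
      using median_in[OF len _ few] k1 by simp
    then show ?thesis unfolding f_def S_def using Iok by blast
  qed
  have "measure_pmf.prob (iid_pmf k D) (UNIV - f -` S)
      = measure_pmf.prob (iid_pmf k D) ((UNIV - f -` S) \<inter> set_pmf (iid_pmf k D))"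
    by (rule measure_Int_set_pmf[symmetric])
  also have "\<dots> \<le> measure_pmf.prob (iid_pmf k D) Bad"
    using goodlist by (intro measure_pmf.finite_measure_mono) auto
  finally have "measure_pmf.prob (iid_pmf k D) (UNIV - f -` S) \<le> d" using tail by linarith
  moreover have "measure_pmf.prob (iid_pmf k D) (UNIV - f -` S) = 1 - measure_pmf.prob (iid_pmf k D) (f -` S)"
    using measure_pmf.prob_compl[of "f -` S" "iid_pmf k D"] by simp
  ultimately show ?thesis unfolding Q S_def[symmetric] by simp
qed

lemma prob_full:
  assumes "set_pmf P \<subseteq> S"
  shows "measure_pmf.prob P S = 1"
proof -
  have "measure_pmf.prob P S = measure_pmf.prob P (S \<inter> set_pmf P)" by (rule measure_Int_set_pmf[symmetric])
  also have "S \<inter> set_pmf P = UNIV \<inter> set_pmf P" using assms by auto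
  also have "measure_pmf.prob P \<dots> = 1" using measure_Int_set_pmf[of P UNIV] measure_pmf.prob_space[of P] by simp
  finally show ?thesis .
qed

lemma sum_pZ:
  assumes Z: "finite Z" and sP: "set_pmf P \<subseteq> X \<times> Y \<times> Z"
  shows "(\<Sum>z\<in>Z. pZ P z) = 1"
proof -
  have "(\<Sum>z\<in>Z. pZ P z) = measure_pmf.prob P (\<Union>z\<in>Z. {t. snd (snd t) = z})"
    unfolding pZ_def using Z
    by (intro measure_pmf.finite_measure_finite_Union[symmetric]) (auto simp: disjoint_family_on_def)
  also have "\<dots> = 1" using sP by (intro prob_full) auto
  finally show ?thesis .
qed

lemma pZ_nonneg: "0 \<le> pZ P z" by (simp add: pZ_def)

lemma sum_pZ_plus:
  assumes Z: "finite Z" and sP: "set_pmf P \<subseteq> X \<times> Y \<times> Z"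
  shows "(\<Sum>z\<in>Zplus Z P. pZ P z) = 1"
proof -
  have "(\<Sum>z\<in>Zplus Z P. pZ P z) = (\<Sum>z\<in>Z. pZ P z)"
    using Z pZ_nonneg[of P] unfolding Zplus_def
    by (intro sum.mono_neutral_left) (auto simp: less_le)
  then show ?thesis using sum_pZ[OF assms] by simp
qed

lemma sum_joint:
  assumes X: "finite X" and Y: "finite Y" and sP: "set_pmf P \<subseteq> X \<times> Y \<times> Z"
  shows "(\<Sum>w\<in>X \<times> Y. pmf P (fst w, snd w, z)) = pZ P z"
proof -
  let ?E = "{t. snd (snd t) = z}"
  have fin: "finite ((\<lambda>w. (fst w, snd w, z)) ` (X \<times> Y))" using X Y by simp
  have "pZ P z = measure_pmf.prob P (?E \<inter> set_pmf P)"
    unfolding pZ_def by (rule measure_Int_set_pmf[symmetric])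
  also have "?E \<inter> set_pmf P = (\<lambda>w. (fst w, snd w, z)) ` (X \<times> Y) \<inter> set_pmf P"
    using sP by force
  also have "measure_pmf.prob P \<dots> = measure_pmf.prob P ((\<lambda>w. (fst w, snd w, z)) ` (X \<times> Y))"
    by (rule measure_Int_set_pmf)
  also have "\<dots> = (\<Sum>t\<in>(\<lambda>w. (fst w, snd w, z)) ` (X \<times> Y). pmf P t)"
    using fin by (rule measure_measure_pmf_finite)
  also have "\<dots> = (\<Sum>w\<in>X \<times> Y. pmf P (fst w, snd w, z))"
    by (subst sum.reindex) (auto simp: inj_on_def)
  finally show ?thesis by simp
qed

lemma pcond_props:
  assumes X: "finite X" and Y: "finite Y" and sP: "set_pmf P \<subseteq> X \<times> Y \<times> Z"
    and z: "z \<in> Zplus Z P"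
  shows "\<forall>w\<in>X \<times> Y. 0 \<le> pcond P z w" "sum (pcond P z) (X \<times> Y) = 1"
proof -
  have pos: "0 < pZ P z" using z by (simp add: Zplus_def)
  show "\<forall>w\<in>X \<times> Y. 0 \<le> pcond P z w" using pos by (simp add: pcond_def)
  have "sum (pcond P z) (X \<times> Y) = (\<Sum>w\<in>X \<times> Y. pmf P (fst w, snd w, z)) / pZ P z"
    unfolding pcond_def by (simp add: sum_divide_distrib)
  also have "\<dots> = 1" using sum_joint[OF X Y sP, of z] pos by simp
  finally show "sum (pcond P z) (X \<times> Y) = 1" .
qed

lemma Zplus_ne:
  assumes Z: "finite Z" and sP: "set_pmf P \<subseteq> X \<times> Y \<times> Z"
  shows "Zplus Z P \<noteq> {}" "finite (Zplus Z P)"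
proof -
  show "finite (Zplus Z P)" using Z by (simp add: Zplus_def)
  show "Zplus Z P \<noteq> {}" using sum_pZ_plus[OF assms] by auto
qed

lemma prob_part:
  assumes X: "finite X" and Y: "finite Y" and Z: "finite Z" and sP: "set_pmf P \<subseteq> X \<times> Y \<times> Z"
    and L: "L > 0" and tau: "\<tau> > 0" and d: "0 < \<delta>" "\<delta> < 1"
  shows "1 - \<delta> \<le> measure_pmf.prob (QCMIE X Y Z P \<tau> \<delta> L)
          {I. \<bar>I - CMI X Y Z P\<bar> \<le> \<tau> + Max ((\<lambda>z. \<bar>etaL X Y L P z\<bar>) ` Zplus Z P)}"
proof -
  define Zp where "Zp = Zplus Z P"
  have Zp: "Zp \<noteq> {}" "finite Zp" using Zplus_ne[OF Z sP] by (auto simp: Zp_def)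
  define n where "n = card Zp"
  have n: "1 \<le> n" using Zp by (simp add: n_def Suc_le_eq card_gt_0_iff)
  define d' where "d' = \<delta> / real n"
  have d': "0 < d'" "d' < 1" using d n by (auto simp: d'_def field_simps)
  define Q where "Q z = QKLA (X \<times> Y) (pcond P z) (qcond P z) \<tau> d' L" for z
  define KC where "KC z = KLclip (X \<times> Y) L (pcond P z) (qcond P z)" for z
  define KLz where "KLz z = KL (X \<times> Y) (pcond P z) (qcond P z)" for z
  define Mx where "Mx = Max ((\<lambda>z. \<bar>etaL X Y L P z\<bar>) ` Zp)"
  define PI where "PI = Pi_pmf Zp 0 Q"
  define F where "F D = (\<Sum>z\<in>Zp. pZ P z * D z)" for D
  have QC: "QCMIE X Y Z P \<tau> \<delta> L = map_pmf F PI"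
    unfolding QCMIE_def PI_def F_def Q_def d'_def n_def Zp_def ..
  have Mx: "\<bar>etaL X Y L P z\<bar> \<le> Mx" if "z \<in> Zp" for z
    unfolding Mx_def using Zp that by (intro Max_ge) auto
  have eta: "etaL X Y L P z = KLz z - KC z" for z by (simp add: etaL_def KLz_def KC_def)
  define G where "G = {D. \<forall>z\<in>Zp. \<bar>D z - KC z\<bar> \<le> \<tau>}"
  have spZ: "(\<Sum>z\<in>Zp. pZ P z) = 1" using sum_pZ_plus[OF Z sP] by (simp add: Zp_def)
  have goodG: "\<bar>F D - CMI X Y Z P\<bar> \<le> \<tau> + Mx" if "D \<in> G" for D
  proof -
    have "F D - CMI X Y Z P = (\<Sum>z\<in>Zp. pZ P z * (D z - KLz z))"
      unfolding F_def CMI_def KLz_def Zp_def by (simp add: sum_subtractf right_diff_distrib)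
    also have "\<bar>\<dots>\<bar> \<le> (\<Sum>z\<in>Zp. \<bar>pZ P z * (D z - KLz z)\<bar>)" by (rule sum_abs)
    also have "\<dots> \<le> (\<Sum>z\<in>Zp. pZ P z * (\<tau> + Mx))"
    proof (intro sum_mono)
      fix z assume z: "z \<in> Zp"
      have "\<bar>D z - KLz z\<bar> \<le> \<bar>D z - KC z\<bar> + \<bar>etaL X Y L P z\<bar>" unfolding eta by linarith
      also have "\<dots> \<le> \<tau> + Mx" using that z Mx[OF z] unfolding G_def by auto
      finally show "\<bar>pZ P z * (D z - KLz z)\<bar> \<le> pZ P z * (\<tau> + Mx)"
        using pZ_nonneg[of P z] by (simp add: abs_mult mult_left_mono)
    qed
    also have "\<dots> = \<tau> + Mx" using spZ by (simp add: sum_distrib_right[symmetric])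
    finally show ?thesis .
  qed
  have comp: "measure_pmf.prob PI {D. \<not> \<bar>D z - KC z\<bar> \<le> \<tau>} \<le> d'" if z: "z \<in> Zp" for z
  proof -
    have "measure_pmf.prob PI {D. \<not> \<bar>D z - KC z\<bar> \<le> \<tau>}
        = measure_pmf.prob (map_pmf (\<lambda>f. f z) PI) {v. \<not> \<bar>v - KC z\<bar> \<le> \<tau>}" by simp
    also have "map_pmf (\<lambda>f. f z) PI = Q z" unfolding PI_def using Zp z by (simp add: Pi_pmf_component)
    also have "measure_pmf.prob (Q z) {v. \<not> \<bar>v - KC z\<bar> \<le> \<tau>} = 1 - measure_pmf.prob (Q z) {v. \<bar>v - KC z\<bar> \<le> \<tau>}"
    proof -
      have "UNIV - {v. \<bar>v - KC z\<bar> \<le> \<tau>} = {v. \<not> \<bar>v - KC z\<bar> \<le> \<tau>}" by auto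
      then show ?thesis using measure_pmf.prob_compl[of "{v. \<bar>v - KC z\<bar> \<le> \<tau>}" "Q z"] by simp
    qed
    also have "\<dots> \<le> d'"
    proof -
      have zz: "z \<in> Zplus Z P" using z by (simp add: Zp_def)
      have "1 - d' \<le> measure_pmf.prob (Q z) {v. \<bar>v - KC z\<bar> \<le> \<tau>}"
        unfolding Q_def KC_def using pcond_props[OF X Y sP zz] L tau d'
        by (intro qkla_good) auto
      then show ?thesis by linarith
    qed
    finally show ?thesis .
  qed
  have "measure_pmf.prob PI (UNIV - G) = measure_pmf.prob PI (\<Union>z\<in>Zp. {D. \<not> \<bar>D z - KC z\<bar> \<le> \<tau>})"
    unfolding G_def by (rule arg_cong[where f="measure_pmf.prob PI"]) auto
  also have "\<dots> \<le> (\<Sum>z\<in>Zp. measure_pmf.prob PI {D. \<not> \<bar>D z - KC z\<bar> \<le> \<tau>})"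
    using Zp by (intro measure_pmf.finite_measure_subadditive_finite) auto
  also have "\<dots> \<le> (\<Sum>z\<in>Zp. d')" using comp by (intro sum_mono) auto
  also have "\<dots> = \<delta>" using n by (simp add: d'_def n_def)
  finally have "measure_pmf.prob PI (UNIV - G) \<le> \<delta>" .
  moreover have "measure_pmf.prob PI (UNIV - G) = 1 - measure_pmf.prob PI G"
    using measure_pmf.prob_compl[of G PI] by simp
  ultimately have pG: "1 - \<delta> \<le> measure_pmf.prob PI G" by linarith
  also have "\<dots> \<le> measure_pmf.prob PI (F -` {I. \<bar>I - CMI X Y Z P\<bar> \<le> \<tau> + Mx})"
    using goodG by (intro measure_pmf.finite_measure_mono) auto
  finally show ?thesis unfolding QC Mx_def Zp_def by simp
qed

lemma qkla_M_le:
  assumes "L > 0" "\<tau> > 0"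
  shows "real (qkla_M L \<tau>) \<le> 2 * (4 * pi * L / \<tau> + 1)"
proof -
  define N where "N = real (nat \<lceil>4 * pi * L / \<tau>\<rceil>)"
  have pos: "0 < 4 * pi * L / \<tau>" using assms by simp
  have c1: "(1::int) \<le> \<lceil>4 * pi * L / \<tau>\<rceil>" using pos by (simp add: le_ceiling_iff)
  have Npos: "1 \<le> N" using c1 unfolding N_def by simp
  have N1: "N \<le> 4 * pi * L / \<tau> + 1" unfolding N_def using c1
    by (simp add: of_nat_nat)
  have lg: "0 \<le> log 2 N" using Npos by simp
  have "real (qkla_M L \<tau>) = 2 powr (real (nat \<lceil>log 2 N\<rceil>))" unfolding qkla_M_def N_def
    by (simp add: powr_realpow)
  also have "\<dots> \<le> 2 powr (log 2 N + 1)"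
  proof (intro powr_mono)
    have "of_int \<lceil>log 2 N\<rceil> < log 2 N + 1" by linarith
    then show "real (nat \<lceil>log 2 N\<rceil>) \<le> log 2 N + 1" using lg by (simp add: of_nat_nat)
  qed simp
  also have "\<dots> = 2 * N" using Npos by (simp add: powr_add)
  finally show ?thesis using N1 by simp
qed

lemma ln2_half: "1/2 \<le> ln (2::real)"
proof -
  have "exp (1/2::real) * exp (1/2) = exp 1" by (simp add: exp_add[symmetric])
  also have "\<dots> < 4" using e_less_272 by simp
  finally have e4: "exp (1/2::real) * exp (1/2) < 4" .
  have "exp (1/2::real) < 2"
  proof (rule ccontr)
    assume "\<not> exp (1/2::real) < 2"
    then have "2 * 2 \<le> exp (1/2::real) * exp (1/2)" by (intro mult_mono) auto
    with e4 show False by simp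
  qed
  then have "ln (exp (1/2::real)) \<le> ln 2" by (subst ln_le_cancel_iff) auto
  then show ?thesis by simp
qed

lemma lin_aux: "m \<le> 2*(x+1) \<Longrightarrow> x \<le> 13*r \<Longrightarrow> 1 \<le> r \<Longrightarrow> m \<le> 28*(r::real)"
proof -
  assume a: "m \<le> 2*(x+1)" "x \<le> 13*r" "1 \<le> r"
  have "2*(x+1) = 2*x + 2" by simp
  with a show ?thesis by linarith
qed

lemma query_part:
  assumes Z: "finite Z" and sP: "set_pmf P \<subseteq> X \<times> Y \<times> Z"
    and L: "L > 0" and tau: "\<tau> > 0" "\<tau> \<le> L" and d: "0 < \<delta>" "\<delta> \<le> 1/2"
  shows "real (qcmie_queries Z P \<tau> \<delta> L) \<le> 1200 * real (card Z) * (L / \<tau>) * ln (real (card Z) / \<delta>)"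
proof -
  define Zp where "Zp = Zplus Z P"
  have Zp: "Zp \<noteq> {}" "finite Zp" using Zplus_ne[OF Z sP] by (auto simp: Zp_def)
  define n where "n = card Zp"
  have n: "1 \<le> n" using Zp by (simp add: n_def Suc_le_eq card_gt_0_iff)
  have nz: "n \<le> card Z" unfolding n_def Zp_def Zplus_def using Z by (intro card_mono) auto
  define cz where "cz = real (card Z)"
  have cz: "1 \<le> cz" "real n \<le> cz" using n nz by (auto simp: cz_def)
  define r where "r = L / \<tau>"
  have r: "1 \<le> r" using tau by (simp add: r_def)
  define lz where "lz = ln (cz / \<delta>)"
  have "2 \<le> cz / \<delta>" using cz d by (simp add: field_simps)
  then have "ln 2 \<le> lz" unfolding lz_def by (subst ln_le_cancel_iff) auto
  then have lz: "1/2 \<le> lz" using ln2_half by linarith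
  define k where "k = qkla_k (\<delta> / real n)"
  have nd: "1 \<le> real n / \<delta>" using n d by (simp add: field_simps)
  have "ln (real n / \<delta>) \<le> lz" unfolding lz_def using cz d nd by (subst ln_le_cancel_iff) (auto simp: divide_right_mono)
  moreover have l0: "0 \<le> ln (real n / \<delta>)" using nd by simp
  moreover have "real k \<le> 5 * ln (real n / \<delta>) + 1"
  proof -
    have "1 / (\<delta> / real n) = real n / \<delta>" by simp
    then have "real k = real (nat \<lceil>5 * ln (real n / \<delta>)\<rceil>)" unfolding k_def qkla_k_def by simp
    also have "\<dots> \<le> 5 * ln (real n / \<delta>) + 1" using l0 by (simp add: of_nat_nat)
    finally show ?thesis .
  qed
  ultimately have k: "real k \<le> 7 * lz" using lz by linarith
  define M where "M = qkla_M L \<tau>"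
  have "real M \<le> 2 * (4 * pi * L / \<tau> + 1)" unfolding M_def using qkla_M_le[OF L tau(1)] .
  moreover have "4 * pi * L / \<tau> \<le> 13 * r"
  proof -
    have "4 * pi * L / \<tau> = (4 * pi) * r" by (simp add: r_def)
    also have "\<dots> \<le> 13 * r" using pi_approx r by (intro mult_right_mono) auto
    finally show ?thesis .
  qed
  ultimately have "real M \<le> 28 * r" using r by (rule lin_aux)
  then have Mb: "3 + 6 * real M \<le> 171 * r" using r by linarith
  have "real (qcmie_queries Z P \<tau> \<delta> L) = real n * (real k * (3 + 6 * real M))"
    unfolding qcmie_queries_def qkla_queries_def n_def Zp_def k_def M_def by simp
  also have "\<dots> \<le> cz * (7 * lz * (171 * r))"
    using cz k Mb by (intro mult_mono) auto
  also have "\<dots> \<le> 1200 * cz * r * lz" using cz r lz by (simp add: mult_right_mono)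
  finally show ?thesis unfolding cz_def r_def lz_def .
qed

theorem theorem3:
  "\<exists>C>0. \<forall>(X::nat set) (Y::nat set) (Z::nat set) (P::(nat \<times> nat \<times> nat) pmf)
           (L::real) (\<tau>::real) (\<delta>::real).
      finite X \<and> finite Y \<and> finite Z \<and> set_pmf P \<subseteq> X \<times> Y \<times> Z \<and>
      L > 0 \<and> \<tau> > 0 \<and> 0 < \<delta> \<and> \<delta> < 1 \<longrightarrow>
        measure_pmf.prob (QCMIE X Y Z P \<tau> \<delta> L)
          {I. \<bar>I - CMI X Y Z P\<bar> \<le> \<tau> + Max ((\<lambda>z. \<bar>etaL X Y L P z\<bar>) ` Zplus Z P)}
          \<ge> 1 - \<delta>
      \<and> (\<tau> \<le> L \<and> \<delta> \<le> 1/2 \<longrightarrow>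
          real (qcmie_queries Z P \<tau> \<delta> L)
            \<le> C * real (card Z) * (L / \<tau>) * ln (real (card Z) / \<delta>))"
proof (intro exI[of _ 1200] conjI allI impI)
  show "(0::real) < 1200" by simp
next
  fix X Y Z :: "nat set" and P :: "(nat \<times> nat \<times> nat) pmf" and L \<tau> \<delta> :: real
  assume h: "finite X \<and> finite Y \<and> finite Z \<and> set_pmf P \<subseteq> X \<times> Y \<times> Z \<and>
      L > 0 \<and> \<tau> > 0 \<and> 0 < \<delta> \<and> \<delta> < 1"
  then have hs: "finite X" "finite Y" "finite Z" "set_pmf P \<subseteq> X \<times> Y \<times> Z" "L > 0" "\<tau> > 0" "0 < \<delta>" "\<delta> < 1"
    by auto
  show "measure_pmf.prob (QCMIE X Y Z P \<tau> \<delta> L)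
          {I. \<bar>I - CMI X Y Z P\<bar> \<le> \<tau> + Max ((\<lambda>z. \<bar>etaL X Y L P z\<bar>) ` Zplus Z P)}
          \<ge> 1 - \<delta>" by (rule prob_part[OF hs])
  {
    assume h2: "\<tau> \<le> L \<and> \<delta> \<le> 1/2"
    then show "real (qcmie_queries Z P \<tau> \<delta> L)
            \<le> 1200 * real (card Z) * (L / \<tau>) * ln (real (card Z) / \<delta>)"
      using h2 hs(7) by (intro query_part[OF hs(3,4,5,6)]) auto
  }
qed

end
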